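(* Let $\psi:\Sigma\to\mathbb{H}^2\times\mathbb{R}\subset\mathbb{L}^4$ be a conformal immersion with regular vertical projection and constant mean curvature $1/2$ with respect to its canonical orientation, with induced metric $\lambda|dz|^2$, angle function $u>0$, unit normal $\eta$, vertical projection $N$, hyperbolic Gauss map $G$, and Abresch–Rosenberg differential $Q\,dz^2$ with $Q$ nowhere zero. Then $$\psi^\sharp=-\psi+\frac2u(G,1)=-\psi+\frac{2}{u^2}(\eta+N)$$ is a conformal immersion $\Sigma\to\mathbb{H}^2\times\mathbb{R}$ with regular vertical projection and constant mean curvature $1/2$ with respect to its canonical orientation; its hyperbolic Gauss map is $G$, its angle function is $u$, and its metric is $\lambda^\sharp|dz|^2$ with $\lambda^\sharp=\frac{16|Q|^2}{\lambda u^4}$.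
   Context: $\mathbb{L}^4=(\mathbb{R}^4,\langle,\rangle=-dx_0^2+dx_1^2+dx_2^2+dx_3^2)$, $\mathbb{H}^2=\{x\in\mathbb{L}^3:\langle x,x\rangle=-1,x_0>0\}$ in the first three coordinates, $\mathbb{H}^2\times\mathbb{R}\subset\mathbb{L}^4$; linear operations are in $\mathbb{L}^4$. For $\psi=(N,h)$: $\eta=(\hat N,u)$ is the unit normal tangent to $\mathbb{H}^2\times\mathbb{R}$, $u$ the angle function; regular vertical projection means $u\ne0$, canonical orientation $u>0$; hyperbolic Gauss map $G$ by $(G,1)=(\eta+N)/u$; $p=-\langle\psi_z,\eta_z\rangle$, $H$ mean curvature, Abresch–Rosenberg differential $Q=2Hp+h_z^2$. *)

theory Defs
  imports "HOL-Analysis.Analysis"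
begin

type_synonym L4 = "real ^ 4"

definition lor :: "L4 \<Rightarrow> L4 \<Rightarrow> real" where
  "lor x y = - (x$0 * y$0) + x$1 * y$1 + x$2 * y$2 + x$3 * y$3"

definition H2R :: "L4 set" where
  "H2R = {x. - (x$0 * x$0) + x$1 * x$1 + x$2 * x$2 = -1 \<and> x$0 > 0}"

text \<open>For x = (N,h) in H^2 x R, the vertical projection (N,0), seen in L^4.\<close>
definition vproj :: "L4 \<Rightarrow> L4" where
  "vproj x = (\<chi> i. if i = 3 then 0 else x $ i)"

definition height :: "L4 \<Rightarrow> real" where
  "height x = x $ 3"

definition px :: "(complex \<Rightarrow> 'a::real_normed_vector) \<Rightarrow> complex \<Rightarrow> 'a" where
  "px f z = vector_derivative (\<lambda>t::real. f (z + of_real t)) (at 0)"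

definition py :: "(complex \<Rightarrow> 'a::real_normed_vector) \<Rightarrow> complex \<Rightarrow> 'a" where
  "py f z = vector_derivative (\<lambda>t::real. f (z + of_real t * \<i>)) (at 0)"

text \<open>Iterated partial derivatives; True = d/dx, False = d/dy.\<close>
fun pd :: "bool list \<Rightarrow> (complex \<Rightarrow> 'a::real_normed_vector) \<Rightarrow> complex \<Rightarrow> 'a" where
  "pd [] f = f"
| "pd (d # ds) f = (if d then px (pd ds f) else py (pd ds f))"

definition smooth_on :: "complex set \<Rightarrow> (complex \<Rightarrow> 'a::real_normed_vector) \<Rightarrow> bool" where
  "smooth_on S f \<longleftrightarrow> (\<forall>ds. \<forall>z\<in>S. pd ds f differentiable (at z))"

definition lam :: "(complex \<Rightarrow> L4) \<Rightarrow> complex \<Rightarrow> real" where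
  "lam \<psi> z = lor (px \<psi> z) (px \<psi> z)"

definition conformal_immersion :: "complex set \<Rightarrow> (complex \<Rightarrow> L4) \<Rightarrow> bool" where
  "conformal_immersion S \<psi> \<longleftrightarrow> smooth_on S \<psi> \<and>
     (\<forall>z\<in>S. \<psi> z \<in> H2R \<and> lam \<psi> z > 0 \<and>
        lor (py \<psi> z) (py \<psi> z) = lam \<psi> z \<and> lor (px \<psi> z) (py \<psi> z) = 0)"

definition unit_normal :: "complex set \<Rightarrow> (complex \<Rightarrow> L4) \<Rightarrow> (complex \<Rightarrow> L4) \<Rightarrow> bool" where
  "unit_normal S \<psi> \<eta> \<longleftrightarrow> (\<forall>z\<in>S. lor (\<eta> z) (\<eta> z) = 1 \<and>
      lor (\<eta> z) (px \<psi> z) = 0 \<and> lor (\<eta> z) (py \<psi> z) = 0 \<and>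
      lor (\<eta> z) (vproj (\<psi> z)) = 0)"

definition angle :: "(complex \<Rightarrow> L4) \<Rightarrow> complex \<Rightarrow> real" where
  "angle \<eta> z = \<eta> z $ 3"

definition meancurv :: "(complex \<Rightarrow> L4) \<Rightarrow> (complex \<Rightarrow> L4) \<Rightarrow> complex \<Rightarrow> real" where
  "meancurv \<psi> \<eta> z =
     (lor (px (px \<psi>) z) (\<eta> z) + lor (py (py \<psi>) z) (\<eta> z)) / (2 * lam \<psi> z)"

text \<open>Complexified vectors as pairs (real part, imaginary part); complex-bilinear
  extension of the Lorentzian product; f_z = (f_x - i f_y)/2.\<close>
definition lorC :: "L4 \<times> L4 \<Rightarrow> L4 \<times> L4 \<Rightarrow> complex" where
  "lorC v w = Complex (lor (fst v) (fst w) - lor (snd v) (snd w))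
                      (lor (fst v) (snd w) + lor (snd v) (fst w))"

definition dz :: "(complex \<Rightarrow> L4) \<Rightarrow> complex \<Rightarrow> L4 \<times> L4" where
  "dz f z = ((1/2) *\<^sub>R px f z, - (1/2) *\<^sub>R py f z)"

definition dzr :: "(complex \<Rightarrow> real) \<Rightarrow> complex \<Rightarrow> complex" where
  "dzr f z = Complex (px f z / 2) (- py f z / 2)"

definition pfun :: "(complex \<Rightarrow> L4) \<Rightarrow> (complex \<Rightarrow> L4) \<Rightarrow> complex \<Rightarrow> complex" where
  "pfun \<psi> \<eta> z = - lorC (dz \<psi> z) (dz \<eta> z)"

definition ARQ :: "(complex \<Rightarrow> L4) \<Rightarrow> (complex \<Rightarrow> L4) \<Rightarrow> complex \<Rightarrow> complex" where
  "ARQ \<psi> \<eta> z = 2 * of_real (meancurv \<psi> \<eta> z) * pfun \<psi> \<eta> z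
                 + (dzr (\<lambda>w. height (\<psi> w)) z)^2"

text \<open>(G,1) = (\<eta> + N)/u, with G the hyperbolic Gauss map.\<close>
definition hgauss1 :: "(complex \<Rightarrow> L4) \<Rightarrow> (complex \<Rightarrow> L4) \<Rightarrow> complex \<Rightarrow> L4" where
  "hgauss1 \<psi> \<eta> z = (1 / angle \<eta> z) *\<^sub>R (\<eta> z + vproj (\<psi> z))"

definition psharp :: "(complex \<Rightarrow> L4) \<Rightarrow> (complex \<Rightarrow> L4) \<Rightarrow> complex \<Rightarrow> L4" where
  "psharp \<psi> \<eta> z = - \<psi> z + (2 / angle \<eta> z) *\<^sub>R hgauss1 \<psi> \<eta> z"

end

theory Submission
  imports Defs
begin

lemma px_hasderiv:
  assumes "(f has_derivative f') (at w)"
  shows "px f w = f' 1"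
proof -
  have l: "linear f'" using assms has_derivative_linear by blast
  have "((\<lambda>t::real. w + of_real t) has_derivative (\<lambda>t. of_real t)) (at 0)"
    by (auto intro!: derivative_eq_intros)
  from has_derivative_compose[OF this] assms
  have "((\<lambda>t. f (w + of_real t)) has_derivative (\<lambda>t. f' (of_real t))) (at 0)" by simp
  moreover have "\<And>t. f' (of_real t) = t *\<^sub>R f' 1"
    by (metis l linear_scale mult.right_neutral scaleR_conv_of_real)
  ultimately have "((\<lambda>t. f (w + of_real t)) has_vector_derivative f' 1) (at 0)"
    unfolding has_vector_derivative_def by simp
  then show ?thesis unfolding px_def by (rule vector_derivative_at)
qed

lemma py_hasderiv:
  assumes "(f has_derivative f') (at w)"
  shows "py f w = f' \<i>"
proof -
  have l: "linear f'" using assms has_derivative_linear by blast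
  have "((\<lambda>t::real. w + of_real t * \<i>) has_derivative (\<lambda>t. of_real t * \<i>)) (at 0)"
    by (auto intro!: derivative_eq_intros)
  from has_derivative_compose[OF this] assms
  have "((\<lambda>t. f (w + of_real t * \<i>)) has_derivative (\<lambda>t. f' (of_real t * \<i>))) (at 0)" by simp
  moreover have "\<And>t. f' (of_real t * \<i>) = t *\<^sub>R f' \<i>"
    by (metis l linear_scale scaleR_conv_of_real)
  ultimately have "((\<lambda>t. f (w + of_real t * \<i>)) has_vector_derivative f' \<i>) (at 0)"
    unfolding has_vector_derivative_def by simp
  then show ?thesis unfolding py_def by (rule vector_derivative_at)
qed

lemma px_diff: "f differentiable (at w) \<Longrightarrow> px f w = frechet_derivative f (at w) 1"
  by (simp add: frechet_derivative_works px_hasderiv)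
lemma py_diff: "f differentiable (at w) \<Longrightarrow> py f w = frechet_derivative f (at w) \<i>"
  by (simp add: frechet_derivative_works py_hasderiv)

lemma deriv_local:
  assumes "open S" "z \<in> S" "\<forall>w\<in>S. f w = g w" "g differentiable (at z)"
  shows "f differentiable (at z)" "px f z = px g z" "py f z = py g z"
proof -
  have g: "(g has_derivative frechet_derivative g (at z)) (at z)"
    using assms(4) frechet_derivative_works by blast
  have f: "(f has_derivative frechet_derivative g (at z)) (at z)"
    by (rule has_derivative_transform_within_open[OF g assms(1,2)]) (use assms(3) in auto)
  show "f differentiable (at z)" using f differentiable_def by blast
  show "px f z = px g z" using px_hasderiv[OF f] px_hasderiv[OF g] by simp
  show "py f z = py g z" using py_hasderiv[OF f] py_hasderiv[OF g] by simp
qed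

lemma pd_px: "pd ds (px f) = pd (ds @ [True]) f"
  by (induction ds) auto
lemma pd_py: "pd ds (py f) = pd (ds @ [False]) f"
  by (induction ds) auto

definition sm :: "complex set \<Rightarrow> nat \<Rightarrow> (complex \<Rightarrow> 'a::real_normed_vector) \<Rightarrow> bool" where
  "sm S n f \<longleftrightarrow> (\<forall>ds. length ds \<le> n \<longrightarrow> (\<forall>z\<in>S. pd ds f differentiable (at z)))"

lemma sm_Suc: "sm S (Suc n) f \<longleftrightarrow>
   (\<forall>z\<in>S. f differentiable (at z)) \<and> sm S n (px f) \<and> sm S n (py f)"
proof
  assume a: "sm S (Suc n) f"
  show "(\<forall>z\<in>S. f differentiable (at z)) \<and> sm S n (px f) \<and> sm S n (py f)"
  proof (intro conjI)
    show "\<forall>z\<in>S. f differentiable (at z)" using a unfolding sm_def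
      by (metis le0 list.size(3) pd.simps(1))
    show "sm S n (px f)" using a unfolding sm_def pd_px by auto
    show "sm S n (py f)" using a unfolding sm_def pd_py by auto
  qed
next
  assume a: "(\<forall>z\<in>S. f differentiable (at z)) \<and> sm S n (px f) \<and> sm S n (py f)"
  show "sm S (Suc n) f" unfolding sm_def
  proof (intro allI impI)
    fix ds :: "bool list" assume l: "length ds \<le> Suc n"
    show "\<forall>z\<in>S. pd ds f differentiable (at z)"
    proof (cases ds rule: rev_exhaust)
      case Nil then show ?thesis using a by simp
    next
      case (snoc ys d)
      then have "length ys \<le> n" using l by simp
      then show ?thesis using a unfolding sm_def snoc
        by (cases d) (auto simp flip: pd_px pd_py)
    qed
  qed
qed

lemma sm_SucD: "sm S (Suc n) f \<Longrightarrow> sm S n (px f)" "sm S (Suc n) f \<Longrightarrow> sm S n (py f)"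
  by (simp_all add: sm_Suc)

lemma sm_mono: "sm S (Suc n) f \<Longrightarrow> sm S n f"
  unfolding sm_def by auto

lemma sm_0: "sm S 0 f \<longleftrightarrow> (\<forall>z\<in>S. f differentiable (at z))"
  unfolding sm_def by auto

lemma sm_diff: "sm S n f \<Longrightarrow> z \<in> S \<Longrightarrow> f differentiable (at z)"
  unfolding sm_def by (metis le0 list.size(3) pd.simps(1))

lemma smooth_sm: "smooth_on S f \<longleftrightarrow> (\<forall>n. sm S n f)"
  unfolding smooth_on_def sm_def by auto

lemma sm_cong:
  assumes "open S" "\<forall>w\<in>S. f w = g w" "sm S n g"
  shows "sm S n f"
proof -
  have "length ds \<le> n \<longrightarrow> (\<forall>w\<in>S. pd ds f w = pd ds g w) \<and> (\<forall>z\<in>S. pd ds f differentiable (at z))" for ds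
  proof (induction ds)
    case Nil
    then show ?case using assms deriv_local(1)[OF assms(1) _ assms(2)] sm_diff[OF assms(3)] by auto
  next
    case (Cons d ds)
    show ?case
    proof
      assume l: "length (d # ds) \<le> n"
      then have e: "\<forall>w\<in>S. pd ds f w = pd ds g w" and dg: "\<forall>z\<in>S. pd ds g differentiable (at z)"
        using Cons assms(3) unfolding sm_def by auto
      have dg2: "\<forall>z\<in>S. pd (d#ds) g differentiable (at z)" using l assms(3) unfolding sm_def by blast
      have e2: "\<forall>w\<in>S. pd (d#ds) f w = pd (d#ds) g w"
        using deriv_local(2,3)[OF assms(1) _ e] dg by auto
      show "(\<forall>w\<in>S. pd (d # ds) f w = pd (d # ds) g w) \<and> (\<forall>z\<in>S. pd (d # ds) f differentiable (at z))"
        using e2 deriv_local(1)[OF assms(1) _ e2] dg2 by auto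
    qed
  qed
  then show ?thesis unfolding sm_def by auto
qed

lemma px_bil:
  assumes "bounded_bilinear bp" "f differentiable (at z)" "g differentiable (at z)"
  shows "(\<lambda>w. bp (f w) (g w)) differentiable (at z)"
    "px (\<lambda>w. bp (f w) (g w)) z = bp (px f z) (g z) + bp (f z) (px g z)"
    "py (\<lambda>w. bp (f w) (g w)) z = bp (py f z) (g z) + bp (f z) (py g z)"
proof -
  have f: "(f has_derivative frechet_derivative f (at z)) (at z)"
    using assms(2) frechet_derivative_works by blast
  have g: "(g has_derivative frechet_derivative g (at z)) (at z)"
    using assms(3) frechet_derivative_works by blast
  note h = bounded_bilinear.FDERIV[OF assms(1) f g]
  show "(\<lambda>w. bp (f w) (g w)) differentiable (at z)" using h differentiable_def by blast
  show "px (\<lambda>w. bp (f w) (g w)) z = bp (px f z) (g z) + bp (f z) (px g z)"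
    using px_hasderiv[OF h] px_diff[OF assms(2)] px_diff[OF assms(3)] by (simp add: add.commute)
  show "py (\<lambda>w. bp (f w) (g w)) z = bp (py f z) (g z) + bp (f z) (py g z)"
    using py_hasderiv[OF h] py_diff[OF assms(2)] py_diff[OF assms(3)] by (simp add: add.commute)
qed

lemma px_lin:
  assumes "bounded_linear L" "f differentiable (at z)"
  shows "(\<lambda>w. L (f w)) differentiable (at z)"
    "px (\<lambda>w. L (f w)) z = L (px f z)"
    "py (\<lambda>w. L (f w)) z = L (py f z)"
proof -
  have f: "(f has_derivative frechet_derivative f (at z)) (at z)"
    using assms(2) frechet_derivative_works by blast
  note h = bounded_linear.has_derivative[OF assms(1) f]
  show "(\<lambda>w. L (f w)) differentiable (at z)" using h differentiable_def by blast
  show "px (\<lambda>w. L (f w)) z = L (px f z)"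
    using px_hasderiv[OF h] px_diff[OF assms(2)] by simp
  show "py (\<lambda>w. L (f w)) z = L (py f z)"
    using py_hasderiv[OF h] py_diff[OF assms(2)] by simp
qed

lemma px_add:
  assumes "f differentiable (at z)" "g differentiable (at z)"
  shows "(\<lambda>w. f w + g w) differentiable (at z)"
    "px (\<lambda>w. f w + g w) z = px f z + px g z"
    "py (\<lambda>w. f w + g w) z = py f z + py g z"
proof -
  have f: "(f has_derivative frechet_derivative f (at z)) (at z)"
    using assms(1) frechet_derivative_works by blast
  have g: "(g has_derivative frechet_derivative g (at z)) (at z)"
    using assms(2) frechet_derivative_works by blast
  note h = has_derivative_add[OF f g]
  show "(\<lambda>w. f w + g w) differentiable (at z)" using h differentiable_def by blast
  show "px (\<lambda>w. f w + g w) z = px f z + px g z"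
    using px_hasderiv[OF h] px_diff[OF assms(1)] px_diff[OF assms(2)] by simp
  show "py (\<lambda>w. f w + g w) z = py f z + py g z"
    using py_hasderiv[OF h] py_diff[OF assms(1)] py_diff[OF assms(2)] by simp
qed

lemma px_const: "px (\<lambda>w. c) z = 0" "py (\<lambda>w. c) z = 0"
  using px_hasderiv[OF has_derivative_const] py_hasderiv[OF has_derivative_const] by auto

lemma sm_const: "sm S n (\<lambda>w. c)"
proof (induction n arbitrary: c)
  case 0 then show ?case by (simp add: sm_0)
next
  case (Suc n)
  have "px (\<lambda>w. c) = (\<lambda>w. 0)" "py (\<lambda>w. c) = (\<lambda>w. 0)" by (simp_all add: fun_eq_iff px_const)
  then show ?case using Suc by (simp add: sm_Suc)
qed

lemma sm_add:
  assumes "open S" shows "sm S n f \<Longrightarrow> sm S n g \<Longrightarrow> sm S n (\<lambda>w. f w + g w)"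
proof (induction n arbitrary: f g)
  case 0 then show ?case using px_add(1) by (auto simp: sm_0)
next
  case (Suc n)
  have df: "\<forall>z\<in>S. f differentiable (at z)" and dg: "\<forall>z\<in>S. g differentiable (at z)"
    using sm_diff[OF Suc.prems(1)] sm_diff[OF Suc.prems(2)] by blast+
  have s1: "sm S n (\<lambda>w. px f w + px g w)" and s2: "sm S n (\<lambda>w. py f w + py g w)"
    using Suc.IH[of "px f" "px g"] Suc.IH[of "py f" "py g"] Suc.prems by (simp_all add: sm_Suc)
  have e1: "\<forall>w\<in>S. px (\<lambda>w. f w + g w) w = px f w + px g w"
    and e2: "\<forall>w\<in>S. py (\<lambda>w. f w + g w) w = py f w + py g w" using px_add(2,3)[of f _ g] df dg by auto
  have d: "\<forall>z\<in>S. (\<lambda>w. f w + g w) differentiable (at z)" using px_add(1)[of f _ g] df dg by auto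
  show ?case
    apply (subst sm_Suc)
    apply (intro conjI)
      apply (rule d)
     apply (rule sm_cong[OF assms(1) e1 s1])
    apply (rule sm_cong[OF assms(1) e2 s2])
    done
qed

lemma sm_lin:
  assumes "open S" "bounded_linear L" shows "sm S n f \<Longrightarrow> sm S n (\<lambda>w. L (f w))"
proof (induction n arbitrary: f)
  case 0 then show ?case using px_lin(1)[OF assms(2)] by (auto simp: sm_0)
next
  case (Suc n)
  have df: "\<forall>z\<in>S. f differentiable (at z)" using sm_diff[OF Suc.prems(1)] by blast
  have s1: "sm S n (\<lambda>w. L (px f w))" and s2: "sm S n (\<lambda>w. L (py f w))"
    using Suc.IH[of "px f"] Suc.IH[of "py f"] Suc.prems by (simp_all add: sm_Suc)
  have e1: "\<forall>w\<in>S. px (\<lambda>w. L (f w)) w = L (px f w)"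
    and e2: "\<forall>w\<in>S. py (\<lambda>w. L (f w)) w = L (py f w)" using px_lin(2,3)[OF assms(2), of f] df by auto
  have d: "\<forall>z\<in>S. (\<lambda>w. L (f w)) differentiable (at z)" using px_lin(1)[OF assms(2), of f] df by auto
  show ?case
    apply (subst sm_Suc)
    apply (intro conjI)
      apply (rule d)
     apply (rule sm_cong[OF assms(1) e1 s1])
    apply (rule sm_cong[OF assms(1) e2 s2])
    done
qed

lemma sm_bil:
  assumes "open S" "bounded_bilinear bp"
  shows "sm S n f \<Longrightarrow> sm S n g \<Longrightarrow> sm S n (\<lambda>w. bp (f w) (g w))"
proof (induction n arbitrary: f g)
  case 0 then show ?case using px_bil(1)[OF assms(2)] by (auto simp: sm_0)
next
  case (Suc n)
  have df: "\<forall>z\<in>S. f differentiable (at z)" and dg: "\<forall>z\<in>S. g differentiable (at z)"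
    using sm_diff[OF Suc.prems(1)] sm_diff[OF Suc.prems(2)] by blast+
  have f': "sm S n f" "sm S n (px f)" "sm S n (py f)" using sm_mono[OF Suc.prems(1)] sm_SucD[OF Suc.prems(1)] by blast+
  have g': "sm S n g" "sm S n (px g)" "sm S n (py g)" using sm_mono[OF Suc.prems(2)] sm_SucD[OF Suc.prems(2)] by blast+
  have s1: "sm S n (\<lambda>w. bp (px f w) (g w) + bp (f w) (px g w))"
    using Suc.IH[OF f'(2) g'(1)] Suc.IH[OF f'(1) g'(2)] sm_add[OF assms(1)] by blast
  have s2: "sm S n (\<lambda>w. bp (py f w) (g w) + bp (f w) (py g w))"
    using Suc.IH[OF f'(3) g'(1)] Suc.IH[OF f'(1) g'(3)] sm_add[OF assms(1)] by blast
  have e1: "\<forall>w\<in>S. px (\<lambda>w. bp (f w) (g w)) w = bp (px f w) (g w) + bp (f w) (px g w)"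
    and e2: "\<forall>w\<in>S. py (\<lambda>w. bp (f w) (g w)) w = bp (py f w) (g w) + bp (f w) (py g w)"
    using px_bil(2,3)[OF assms(2), of f _ g] df dg by auto
  have d: "\<forall>z\<in>S. (\<lambda>w. bp (f w) (g w)) differentiable (at z)" using px_bil(1)[OF assms(2), of f _ g] df dg by auto
  show ?case
    apply (subst sm_Suc)
    apply (intro conjI)
      apply (rule d)
     apply (rule sm_cong[OF assms(1) e1 s1])
    apply (rule sm_cong[OF assms(1) e2 s2])
    done
qed

lemma px_inv:
  fixes u :: "complex \<Rightarrow> real"
  assumes "u differentiable (at z)" "u z \<noteq> 0"
  shows "(\<lambda>w. inverse (u w)) differentiable (at z)"
    "px (\<lambda>w. inverse (u w)) z = - (px u z * (inverse (u z) * inverse (u z)))"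
    "py (\<lambda>w. inverse (u w)) z = - (py u z * (inverse (u z) * inverse (u z)))"
proof -
  have f: "(u has_derivative frechet_derivative u (at z)) (at z)"
    using assms(1) frechet_derivative_works by blast
  note h = Deriv.has_derivative_inverse[OF assms(2) f]
  show "(\<lambda>w. inverse (u w)) differentiable (at z)" using h differentiable_def by blast
  show "px (\<lambda>w. inverse (u w)) z = - (px u z * (inverse (u z) * inverse (u z)))"
    using px_hasderiv[OF h] px_diff[OF assms(1)] by (simp add: algebra_simps)
  show "py (\<lambda>w. inverse (u w)) z = - (py u z * (inverse (u z) * inverse (u z)))"
    using py_hasderiv[OF h] py_diff[OF assms(1)] by (simp add: algebra_simps)
qed

lemma sm_inv:
  fixes u :: "complex \<Rightarrow> real"
  assumes "open S" "\<forall>w\<in>S. u w \<noteq> 0"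
  shows "sm S n u \<Longrightarrow> sm S n (\<lambda>w. inverse (u w))"
proof (induction n)
  case 0 then show ?case using px_inv(1) assms by (auto simp: sm_0)
next
  case (Suc n)
  have du: "\<forall>z\<in>S. u differentiable (at z)" using sm_diff[OF Suc.prems(1)] by blast
  have u': "sm S n u" "sm S n (px u)" "sm S n (py u)" using sm_mono[OF Suc.prems(1)] sm_SucD[OF Suc.prems(1)] by blast+
  have iu: "sm S n (\<lambda>w. inverse (u w))" using Suc.IH u' by blast
  have m: "bounded_linear (\<lambda>x::real. - x)" by (simp add: bounded_linear_minus bounded_linear_ident)
  have ii: "sm S n (\<lambda>w. inverse (u w) * inverse (u w))"
    using sm_bil[OF assms(1) bounded_bilinear_mult iu iu] .
  have s1: "sm S n (\<lambda>w. - (px u w * (inverse (u w) * inverse (u w))))"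
    using sm_lin[OF assms(1) m sm_bil[OF assms(1) bounded_bilinear_mult u'(2) ii]] .
  have s2: "sm S n (\<lambda>w. - (py u w * (inverse (u w) * inverse (u w))))"
    using sm_lin[OF assms(1) m sm_bil[OF assms(1) bounded_bilinear_mult u'(3) ii]] .
  have e1: "\<forall>w\<in>S. px (\<lambda>w. inverse (u w)) w = - (px u w * (inverse (u w) * inverse (u w)))"
    and e2: "\<forall>w\<in>S. py (\<lambda>w. inverse (u w)) w = - (py u w * (inverse (u w) * inverse (u w)))"
    using px_inv(2,3)[of u] du assms by auto
  have d: "\<forall>z\<in>S. (\<lambda>w. inverse (u w)) differentiable (at z)" using px_inv(1)[of u] du assms by auto
  show ?case
    apply (subst sm_Suc)
    apply (intro conjI)
      apply (rule d)
     apply (rule sm_cong[OF assms(1) e1 s1])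
    apply (rule sm_cong[OF assms(1) e2 s2])
    done
qed

lemma line_px:
  assumes "f differentiable (at (c + of_real a))"
  shows "((\<lambda>t. f (c + of_real t)) has_vector_derivative px f (c + of_real a)) (at a)"
proof -
  let ?D = "frechet_derivative f (at (c + of_real a))"
  have f: "(f has_derivative ?D) (at (c + of_real a))" using assms frechet_derivative_works by blast
  have l: "linear ?D" using f has_derivative_linear by blast
  have "((\<lambda>t::real. c + of_real t) has_derivative (\<lambda>t. of_real t)) (at a)"
    by (auto intro!: derivative_eq_intros)
  from has_derivative_compose[OF this f]
  have "((\<lambda>t. f (c + of_real t)) has_derivative (\<lambda>t. ?D (of_real t))) (at a)" by simp
  moreover have "\<And>t. ?D (of_real t) = t *\<^sub>R ?D 1"
    by (metis l linear_scale mult.right_neutral scaleR_conv_of_real)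
  ultimately show ?thesis unfolding has_vector_derivative_def px_diff[OF assms] by simp
qed

lemma line_py:
  assumes "f differentiable (at (c + of_real b * \<i>))"
  shows "((\<lambda>t. f (c + of_real t * \<i>)) has_vector_derivative py f (c + of_real b * \<i>)) (at b)"
proof -
  let ?D = "frechet_derivative f (at (c + of_real b * \<i>))"
  have f: "(f has_derivative ?D) (at (c + of_real b * \<i>))" using assms frechet_derivative_works by blast
  have l: "linear ?D" using f has_derivative_linear by blast
  have "((\<lambda>t::real. c + of_real t * \<i>) has_derivative (\<lambda>t. of_real t * \<i>)) (at b)"
    by (auto intro!: derivative_eq_intros)
  from has_derivative_compose[OF this f]
  have "((\<lambda>t. f (c + of_real t * \<i>)) has_derivative (\<lambda>t. ?D (of_real t * \<i>))) (at b)" by simp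
  moreover have "\<And>t. ?D (of_real t * \<i>) = t *\<^sub>R ?D \<i>"
    by (metis l linear_scale scaleR_conv_of_real)
  ultimately show ?thesis unfolding has_vector_derivative_def py_diff[OF assms] by simp
qed

lemma schwarz_real:
  fixes g :: "complex \<Rightarrow> real"
  assumes S: "open S" "z \<in> S"
    and dg: "\<forall>w\<in>S. g differentiable (at w)"
    and dgx: "\<forall>w\<in>S. px g differentiable (at w)"
    and dgy: "\<forall>w\<in>S. py g differentiable (at w)"
    and eA: "\<forall>w\<in>S. py (px g) w = A w" and eB: "\<forall>w\<in>S. px (py g) w = B w"
    and cA: "continuous (at z) A" and cB: "continuous (at z) B"
  shows "A z = B z"
proof (rule ccontr)
  assume ne: "A z \<noteq> B z"
  define e where "e = \<bar>A z - B z\<bar> / 3"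
  have e: "e > 0" using ne by (simp add: e_def)
  obtain d1 where d1: "d1 > 0" "\<forall>w. dist w z < d1 \<longrightarrow> dist (A w) (A z) < e"
    using cA e unfolding continuous_at_eps_delta by blast
  obtain d2 where d2: "d2 > 0" "\<forall>w. dist w z < d2 \<longrightarrow> dist (B w) (B z) < e"
    using cB e unfolding continuous_at_eps_delta by blast
  obtain r where r: "r > 0" "ball z r \<subseteq> S" using S open_contains_ball by blast
  define s where "s = min (min d1 d2) r / 3"
  have s: "s > 0" using d1 d2 r by (simp add: s_def)
  define P where "P x y = z + of_real x + of_real y * \<i>" for x y
  have Pin: "dist (P x y) z \<le> 2 * s" if "0 \<le> x" "x \<le> s" "0 \<le> y" "y \<le> s" for x y
  proof -
    have "dist (P x y) z = cmod (of_real x + of_real y * \<i>)" by (simp add: P_def dist_norm)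
    also have "\<dots> \<le> cmod (of_real x) + cmod (of_real y * \<i>)" by (rule norm_triangle_ineq)
    also have "\<dots> \<le> 2 * s" using that by (simp add: norm_mult)
    finally show ?thesis .
  qed
  have PS: "P x y \<in> S" if "0 \<le> x" "x \<le> s" "0 \<le> y" "y \<le> s" for x y
  proof -
    have m: "min (min d1 d2) r \<le> r" by simp
    have "dist (P x y) z < r" using Pin[OF that] s m unfolding s_def by linarith
    then have "dist z (P x y) < r" by (simp add: dist_commute)
    then show ?thesis using r by auto
  qed
  have Pd1: "dist (P x y) z < d1" "dist (P x y) z < d2" if "0 \<le> x" "x \<le> s" "0 \<le> y" "y \<le> s" for x y
    using Pin[OF that] s unfolding s_def by auto
  have Px: "P x y = (z + of_real y * \<i>) + of_real x" for x y by (simp add: P_def algebra_simps)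
  have Py: "P x y = (z + of_real x) + of_real y * \<i>" for x y by (simp add: P_def algebra_simps)
  have "\<exists>a. 0 < a \<and> a < s \<and> (g (P s s) - g (P s 0)) - (g (P 0 s) - g (P 0 0))
          = (s - 0) * (px g (P a s) - px g (P a 0))"
  proof (rule MVT2[OF s, of "\<lambda>a. g (P a s) - g (P a 0)"])
    fix a assume a: "0 \<le> a" "a \<le> s"
    have d1': "g differentiable (at ((z + of_real s * \<i>) + of_real a))" using dg PS[OF a] Px
      by (metis less_eq_real_def s)
    have d0': "g differentiable (at ((z + of_real 0 * \<i>) + of_real a))" using dg PS[OF a, of 0] Px s
      by (metis less_eq_real_def order_refl)
    have "((\<lambda>t. g (P t s) - g (P t 0)) has_vector_derivative (px g (P a s) - px g (P a 0))) (at a)"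
      unfolding Px using has_vector_derivative_diff[OF line_px[OF d1'] line_px[OF d0']] .
    then show "DERIV (\<lambda>a. g (P a s) - g (P a 0)) a :> px g (P a s) - px g (P a 0)"
      by (simp add: has_real_derivative_iff_has_vector_derivative)
  qed
  then obtain a where a: "0 < a" "a < s"
    and ea: "(g (P s s) - g (P s 0)) - (g (P 0 s) - g (P 0 0)) = s * (px g (P a s) - px g (P a 0))"
    by auto
  have "\<exists>b. 0 < b \<and> b < s \<and> px g (P a s) - px g (P a 0) = (s - 0) * A (P a b)"
  proof (rule MVT2[OF s, of "\<lambda>b. px g (P a b)"])
    fix b assume b: "0 \<le> b" "b \<le> s"
    have dd: "px g differentiable (at ((z + of_real a) + of_real b * \<i>))" using dgx PS[of a b] a b Py
      by auto
    have "((\<lambda>t. px g (P a t)) has_vector_derivative py (px g) (P a b)) (at b)"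
      unfolding Py using line_py[OF dd] .
    moreover have "py (px g) (P a b) = A (P a b)" using eA PS[of a b] a b by auto
    ultimately show "DERIV (\<lambda>b. px g (P a b)) b :> A (P a b)"
      by (simp add: has_real_derivative_iff_has_vector_derivative)
  qed
  then obtain b where b: "0 < b" "b < s" and eb: "px g (P a s) - px g (P a 0) = s * A (P a b)" by auto
  have "\<exists>b'. 0 < b' \<and> b' < s \<and> (g (P s s) - g (P 0 s)) - (g (P s 0) - g (P 0 0))
          = (s - 0) * (py g (P s b') - py g (P 0 b'))"
  proof (rule MVT2[OF s, of "\<lambda>b. g (P s b) - g (P 0 b)"])
    fix b assume b: "0 \<le> b" "b \<le> s"
    have d1': "g differentiable (at ((z + of_real s) + of_real b * \<i>))" using dg PS[OF _ _ b, of s] Py s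
      by (metis less_eq_real_def order_refl)
    have d0': "g differentiable (at ((z + of_real 0) + of_real b * \<i>))" using dg PS[OF _ _ b, of 0] Py s
      by (metis less_eq_real_def order_refl)
    have "((\<lambda>t. g (P s t) - g (P 0 t)) has_vector_derivative (py g (P s b) - py g (P 0 b))) (at b)"
      unfolding Py using has_vector_derivative_diff[OF line_py[OF d1'] line_py[OF d0']] .
    then show "DERIV (\<lambda>b. g (P s b) - g (P 0 b)) b :> py g (P s b) - py g (P 0 b)"
      by (simp add: has_real_derivative_iff_has_vector_derivative)
  qed
  then obtain b' where b': "0 < b'" "b' < s"
    and eb': "(g (P s s) - g (P 0 s)) - (g (P s 0) - g (P 0 0)) = s * (py g (P s b') - py g (P 0 b'))"
    by auto
  have "\<exists>a'. 0 < a' \<and> a' < s \<and> py g (P s b') - py g (P 0 b') = (s - 0) * B (P a' b')"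
  proof (rule MVT2[OF s, of "\<lambda>a. py g (P a b')"])
    fix a assume a: "0 \<le> a" "a \<le> s"
    have dd: "py g differentiable (at ((z + of_real b' * \<i>) + of_real a))" using dgy PS[of a b'] a b' Px
      by auto
    have "((\<lambda>t. py g (P t b')) has_vector_derivative px (py g) (P a b')) (at a)"
      unfolding Px using line_px[OF dd] .
    moreover have "px (py g) (P a b') = B (P a b')" using eB PS[of a b'] a b' by auto
    ultimately show "DERIV (\<lambda>a. py g (P a b')) a :> B (P a b')"
      by (simp add: has_real_derivative_iff_has_vector_derivative)
  qed
  then obtain a' where a': "0 < a'" "a' < s" and ea': "py g (P s b') - py g (P 0 b') = s * B (P a' b')" by auto
  have "s * (s * A (P a b)) = s * (s * B (P a' b'))" using ea eb eb' ea' by (simp add: algebra_simps)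
  then have AB: "A (P a b) = B (P a' b')" using s by simp
  have "dist (A (P a b)) (A z) < e" using d1(2) Pd1(1)[of a b] a b by auto
  moreover have "dist (B (P a' b')) (B z) < e" using d2(2) Pd1(2)[of a' b'] a' b' by auto
  ultimately have "\<bar>A z - B z\<bar> < 2 * e" using AB by (simp add: dist_real_def)
  then show False using e e_def by simp
qed

lemma schwarz:
  fixes f :: "complex \<Rightarrow> real ^ 4"
  assumes "open S" "z \<in> S" "sm S 2 f"
  shows "py (px f) z = px (py f) z"
proof -
  have s1: "sm S 1 (px f)" "sm S 1 (py f)" using sm_SucD[of S 1 f] assms(3) by (simp_all add: numeral_2_eq_2)
  have df: "\<forall>w\<in>S. f differentiable (at w)" using sm_diff[OF assms(3)] by blast
  have dfx: "\<forall>w\<in>S. px f differentiable (at w)" using sm_diff[OF s1(1)] by blast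
  have dfy: "\<forall>w\<in>S. py f differentiable (at w)" using sm_diff[OF s1(2)] by blast
  have dfxy: "py (px f) differentiable (at z)" using sm_diff[OF sm_SucD(2)[of S 0 "px f"]] s1 assms(2) by simp
  have dfyx: "px (py f) differentiable (at z)" using sm_diff[OF sm_SucD(1)[of S 0 "py f"]] s1 assms(2) by simp
  have "py (px f) z $ i = px (py f) z $ i" for i
  proof -
    let ?g = "\<lambda>w. f w $ i"
    have L: "bounded_linear (\<lambda>x::real^4. x $ i)" by (rule bounded_linear_vec_nth)
    have dg: "\<forall>w\<in>S. ?g differentiable (at w)" using px_lin(1)[OF L] df by blast
    have ex: "\<forall>w\<in>S. px ?g w = px f w $ i" using px_lin(2)[OF L] df by blast
    have ey: "\<forall>w\<in>S. py ?g w = py f w $ i" using px_lin(3)[OF L] df by blast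
    have dx': "\<forall>w\<in>S. (\<lambda>w. px f w $ i) differentiable (at w)" using px_lin(1)[OF L] dfx by blast
    have dy': "\<forall>w\<in>S. (\<lambda>w. py f w $ i) differentiable (at w)" using px_lin(1)[OF L] dfy by blast
    have dgx: "\<forall>w\<in>S. px ?g differentiable (at w)" using deriv_local(1)[OF assms(1) _ ex] dx' by blast
    have dgy: "\<forall>w\<in>S. py ?g differentiable (at w)" using deriv_local(1)[OF assms(1) _ ey] dy' by blast
    have eA: "\<forall>w\<in>S. py (px ?g) w = py (px f) w $ i"
      using deriv_local(3)[OF assms(1) _ ex] dx' px_lin(3)[OF L] dfx by auto
    have eB: "\<forall>w\<in>S. px (py ?g) w = px (py f) w $ i"
      using deriv_local(2)[OF assms(1) _ ey] dy' px_lin(2)[OF L] dfy by auto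
    have cA: "continuous (at z) (\<lambda>w. py (px f) w $ i)"
      using differentiable_imp_continuous_within[OF px_lin(1)[OF L dfxy]] by simp
    have cB: "continuous (at z) (\<lambda>w. px (py f) w $ i)"
      using differentiable_imp_continuous_within[OF px_lin(1)[OF L dfyx]] by simp
    show ?thesis using schwarz_real[OF assms(1,2) dg dgx dgy eA eB cA cB] .
  qed
  then show ?thesis by (simp add: vec_eq_iff)
qed

lemma lor_add_left[simp]: "lor (x + y) z = lor x z + lor y z" by (simp add: lor_def algebra_simps)
lemma lor_add_right[simp]: "lor x (y + z) = lor x y + lor x z" by (simp add: lor_def algebra_simps)
lemma lor_diff_left[simp]: "lor (x - y) z = lor x z - lor y z" by (simp add: lor_def algebra_simps)
lemma lor_diff_right[simp]: "lor x (y - z) = lor x y - lor x z" by (simp add: lor_def algebra_simps)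
lemma lor_scale_left[simp]: "lor (r *\<^sub>R x) y = r * lor x y" by (simp add: lor_def algebra_simps)
lemma lor_scale_right[simp]: "lor x (r *\<^sub>R y) = r * lor x y" by (simp add: lor_def algebra_simps)
lemma lor_minus_left[simp]: "lor (- x) y = - lor x y" by (simp add: lor_def algebra_simps)
lemma lor_minus_right[simp]: "lor x (- y) = - lor x y" by (simp add: lor_def algebra_simps)
lemma lor_zero[simp]: "lor 0 x = 0" "lor x 0 = 0" by (simp_all add: lor_def)
lemma lor_comm: "lor x y = lor y x" by (simp add: lor_def algebra_simps)

lemma lor_sum_left: "lor (\<Sum>x\<in>A. f x) y = (\<Sum>x\<in>A. lor (f x) y)"
  by (induction A rule: infinite_finite_induct) auto

lemma bounded_bilinear_lor: "bounded_bilinear lor"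
proof
  show "lor (a + a') b = lor a b + lor a' b" for a a' b by simp
  show "lor a (b + b') = lor a b + lor a b'" for a b b' by simp
  show "lor (r *\<^sub>R a) b = r *\<^sub>R lor a b" for r a b by simp
  show "lor a (r *\<^sub>R b) = r *\<^sub>R lor a b" for r a b by simp
  show "\<exists>K. \<forall>a b. norm (lor a b) \<le> norm a * norm b * K"
  proof (intro exI allI)
    fix a b :: L4
    have c: "\<bar>a $ i * b $ i\<bar> \<le> norm a * norm b" for i
      unfolding abs_mult by (intro mult_mono) (auto simp: component_le_norm_cart)
    have "norm (lor a b) \<le> \<bar>a $ 0 * b $ 0\<bar> + \<bar>a $ 1 * b $ 1\<bar> + \<bar>a $ 2 * b $ 2\<bar> + \<bar>a $ 3 * b $ 3\<bar>"
      unfolding lor_def real_norm_def by linarith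
    also have "\<dots> \<le> norm a * norm b * 4" using c[of 0] c[of 1] c[of 2] c[of 3] by linarith
    finally show "norm (lor a b) \<le> norm a * norm b * 4" .
  qed
qed

definition e3 :: L4 where "e3 = (\<chi> i. if i = 3 then 1 else 0)"

lemma e3_nth[simp]: "e3 $ 3 = 1" "e3 $ 0 = 0" "e3 $ 1 = 0" "e3 $ 2 = 0"
  by (simp_all add: e3_def)

lemma lor_e3[simp]: "lor v e3 = v $ 3" "lor e3 v = v $ 3"
  by (simp_all add: lor_def)

lemma vproj_alt: "vproj x = x - (x $ 3) *\<^sub>R e3"
  by (auto simp: vproj_def e3_def vec_eq_iff)

lemma vproj_nth[simp]: "vproj x $ 3 = 0" "vproj x $ 0 = x $ 0" "vproj x $ 1 = x $ 1" "vproj x $ 2 = x $ 2"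
  by (simp_all add: vproj_def)

lemma vproj_vproj[simp]: "vproj (vproj x) = vproj x" by (simp add: vproj_alt)

lemma bounded_linear_vproj: "bounded_linear vproj"
proof -
  have "bounded_linear (\<lambda>x::L4. x - (x $ 3) *\<^sub>R e3)"
    by (intro bounded_linear_sub bounded_linear_ident
        bounded_linear_compose[OF bounded_linear_scaleR_left bounded_linear_vec_nth])
  then show ?thesis by (simp add: vproj_alt[abs_def])
qed

lemma vproj_add[simp]: "vproj (x + y) = vproj x + vproj y"
  and vproj_scale[simp]: "vproj (r *\<^sub>R x) = r *\<^sub>R vproj x"
  and vproj_minus[simp]: "vproj (- x) = - vproj x"
  and vproj_diff[simp]: "vproj (x - y) = vproj x - vproj y"
  by (simp_all add: vproj_alt algebra_simps)

lemma H2R_iff: "x \<in> H2R \<longleftrightarrow> lor (vproj x) (vproj x) = -1 \<and> x $ 0 > 0"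
  by (simp add: H2R_def lor_def)

lemma lor_vproj_left: "lor (vproj x) y = lor x y - x $ 3 * y $ 3"
  by (simp add: vproj_alt)

lemma lor_vproj_right: "lor x (vproj y) = lor x y - x $ 3 * y $ 3"
  by (simp add: vproj_alt)

definition Jm :: "L4 \<Rightarrow> L4" where "Jm v = (\<chi> i. if i = 0 then - v $ 0 else v $ i)"

lemma lor_Jm: "lor v (Jm v) = (v $ 0)^2 + (v $ 1)^2 + (v $ 2)^2 + (v $ 3)^2"
  by (simp add: lor_def Jm_def power2_eq_square)

lemma frame_zero:
  fixes X Y E N W :: L4
  assumes nz: "lor X X \<noteq> 0" "lor Y Y \<noteq> 0" "lor E E \<noteq> 0" "lor N N \<noteq> 0"
    and o: "lor X Y = 0" "lor X E = 0" "lor X N = 0" "lor Y E = 0" "lor Y N = 0" "lor E N = 0"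
    and w: "lor W X = 0" "lor W Y = 0" "lor W E = 0" "lor W N = 0"
  shows "W = 0"
proof -
  let ?B = "{X, Y, E, N}"
  have o': "lor Y X = 0" "lor E X = 0" "lor N X = 0" "lor E Y = 0" "lor N Y = 0" "lor N E = 0"
    using o by (simp_all add: lor_comm)
  have dist: "X \<noteq> Y" "X \<noteq> E" "X \<noteq> N" "Y \<noteq> E" "Y \<noteq> N" "E \<noteq> N"
    using nz o by auto
  have cardB: "card ?B = 4" using dist by auto
  have ind: "independent ?B"
  proof (rule real_vector.independent_if_scalars_zero)
    show "finite ?B" by simp
    fix f and x :: L4
    assume s: "(\<Sum>x\<in>?B. f x *\<^sub>R x) = 0" and x: "x \<in> ?B"
    have "lor (\<Sum>y\<in>?B. f y *\<^sub>R y) x = 0" using s by simp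
    then have "(\<Sum>y\<in>?B. f y * lor y x) = 0" by (simp add: lor_sum_left)
    moreover have "(\<Sum>y\<in>?B. f y * lor y x) = f x * lor x x"
      using x dist o o' by (auto simp: sum.insert_remove)
    ultimately have "f x * lor x x = 0" by simp
    then show "f x = 0" using x nz by auto
  qed
  have "UNIV \<subseteq> span ?B"
    by (rule eucl.card_ge_dim_independent[OF _ ind]) (simp_all add: cardB)
  then have sp: "Jm W \<in> span ?B" by auto
  have sub: "subspace {v. lor W v = 0}" unfolding subspace_def by simp
  have "?B \<subseteq> {v. lor W v = 0}" using w by auto
  then have "span ?B \<subseteq> {v. lor W v = 0}" using span_minimal sub by blast
  then have "lor W (Jm W) = 0" using sp by auto
  then have "(W $ 0)^2 + (W $ 1)^2 + (W $ 2)^2 + (W $ 3)^2 = 0" by (simp add: lor_Jm)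
  then have "W $ 0 = 0" "W $ 1 = 0" "W $ 2 = 0" "W $ 3 = 0"
    by (smt (verit) zero_le_power2 power_eq_0_iff)+
  moreover have f4: "(4::4) = 0" by simp
  moreover have "W $ 4 = W $ 0" using arg_cong[OF f4, of "\<lambda>i. W $ i"] by simp
  ultimately show ?thesis unfolding vec_eq_iff forall_4 by simp
qed

lemma frame_decomp:
  fixes X Y E N V :: L4
  assumes nz: "lor X X \<noteq> 0" "lor Y Y \<noteq> 0" "lor E E \<noteq> 0" "lor N N \<noteq> 0"
    and o: "lor X Y = 0" "lor X E = 0" "lor X N = 0" "lor Y E = 0" "lor Y N = 0" "lor E N = 0"
  shows "V = (lor V X / lor X X) *\<^sub>R X + (lor V Y / lor Y Y) *\<^sub>R Y
           + (lor V E / lor E E) *\<^sub>R E + (lor V N / lor N N) *\<^sub>R N"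
proof -
  have o': "lor Y X = 0" "lor E X = 0" "lor N X = 0" "lor E Y = 0" "lor N Y = 0" "lor N E = 0"
    using o by (simp_all add: lor_comm)
  let ?W = "V - ((lor V X / lor X X) *\<^sub>R X + (lor V Y / lor Y Y) *\<^sub>R Y
           + (lor V E / lor E E) *\<^sub>R E + (lor V N / lor N N) *\<^sub>R N)"
  have "?W = 0"
    by (rule frame_zero[OF nz o]) (use nz o o' in simp_all)
  then show ?thesis by simp
qed

lemma core:
  fixes X Y E Nv Ex Ey :: L4 and lam u hx hy a b c :: real
  assumes lam: "lam > 0" and u: "u > 0"
    and fXX: "lor X X = lam" and fYY: "lor Y Y = lam" and fXY: "lor X Y = 0"
    and fEE: "lor E E = 1" and fEX: "lor E X = 0" and fEY: "lor E Y = 0" and fEN: "lor E Nv = 0"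
    and fNN: "lor Nv Nv = -1" and fXN: "lor X Nv = 0" and fYN: "lor Y Nv = 0" and N3: "Nv $ 3 = 0"
    and E3: "E $ 3 = u" and X3: "X $ 3 = hx" and Y3: "Y $ 3 = hy"
    and xE: "lor Ex E = 0" and yE: "lor Ey E = 0"
    and xN: "lor Ex Nv = - lor E (vproj X)" and yN: "lor Ey Nv = - lor E (vproj Y)"
    and xX: "lor Ex X = a" and xY: "lor Ex Y = b" and yX: "lor Ey X = b" and yY: "lor Ey Y = c"
    and H: "a + c = - lam"
  defines "PX \<equiv> - X + (2 / u^2) *\<^sub>R (Ex + vproj X) + (- 4 * Ex $ 3 / u^3) *\<^sub>R (E + Nv)"
    and "PY \<equiv> - Y + (2 / u^2) *\<^sub>R (Ey + vproj Y) + (- 4 * Ey $ 3 / u^3) *\<^sub>R (E + Nv)"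
    and "ES \<equiv> E + 2 *\<^sub>R Nv - (2 / u^2) *\<^sub>R (vproj E + Nv)"
    and "NS \<equiv> - Nv + (2 / u^2) *\<^sub>R (vproj E + Nv)"
    and "EXs \<equiv> Ex + 2 *\<^sub>R vproj X - (2 / u^2) *\<^sub>R (vproj Ex + vproj X) + (4 * Ex $ 3 / u^3) *\<^sub>R (vproj E + Nv)"
    and "EYs \<equiv> Ey + 2 *\<^sub>R vproj Y - (2 / u^2) *\<^sub>R (vproj Ey + vproj Y) + (4 * Ey $ 3 / u^3) *\<^sub>R (vproj E + Nv)"
    and "LS \<equiv> 16 * (((c - a + hx^2 - hy^2) / 4)^2 + ((b - hx * hy) / 2)^2) / (lam * u^4)"
  shows "lor PX PX = LS" "lor PY PY = LS" "lor PX PY = 0"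
    "lor ES ES = 1" "lor ES PX = 0" "lor ES PY = 0" "lor ES NS = 0"
    "lor NS NS = -1" "lor NS Nv < 0" "- (lor PX EXs + lor PY EYs) = LS"
proof -
  define q1 where "q1 = (c - a + hx^2 - hy^2) / 4"
  define q2 where "q2 = (b - hx * hy) / 2"
  have LS: "LS = 16 * (q1^2 + q2^2) / (lam * u^4)" unfolding LS_def q1_def q2_def ..
  have nz: "lor X X \<noteq> 0" "lor Y Y \<noteq> 0" "lor E E \<noteq> 0" "lor Nv Nv \<noteq> 0" using lam fXX fYY fEE fNN by auto
  have o: "lor X Y = 0" "lor X E = 0" "lor X Nv = 0" "lor Y E = 0" "lor Y Nv = 0" "lor E Nv = 0"
    using fXY fEX fEY fEN fXN fYN by (simp_all add: lor_comm)
  note dec = frame_decomp[OF nz o]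
  define Fr where "Fr = (\<lambda>c1 c2 c3 c4. c1 *\<^sub>R X + c2 *\<^sub>R Y + c3 *\<^sub>R E + c4 *\<^sub>R Nv)"
  have Fr_add: "Fr a1 a2 a3 a4 + Fr b1 b2 b3 b4 = Fr (a1+b1) (a2+b2) (a3+b3) (a4+b4)" for a1 a2 a3 a4 b1 b2 b3 b4
    by (simp add: Fr_def algebra_simps)
  have Fr_diff: "Fr a1 a2 a3 a4 - Fr b1 b2 b3 b4 = Fr (a1-b1) (a2-b2) (a3-b3) (a4-b4)" for a1 a2 a3 a4 b1 b2 b3 b4
    by (simp add: Fr_def algebra_simps)
  have Fr_scale: "r *\<^sub>R Fr a1 a2 a3 a4 = Fr (r*a1) (r*a2) (r*a3) (r*a4)" for r a1 a2 a3 a4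
    by (simp add: Fr_def algebra_simps)
  have Fr_minus: "- Fr a1 a2 a3 a4 = Fr (-a1) (-a2) (-a3) (-a4)" for a1 a2 a3 a4
    by (simp add: Fr_def algebra_simps)
  have o': "lor Y X = 0" "lor E X = 0" "lor Nv X = 0" "lor E Y = 0" "lor Nv Y = 0" "lor Nv E = 0"
    using o by (simp_all add: lor_comm)
  have lor_Fr: "lor (Fr a1 a2 a3 a4) (Fr b1 b2 b3 b4) = lam * (a1*b1 + a2*b2) + a3*b3 - a4*b4" for a1 a2 a3 a4 b1 b2 b3 b4
    by (simp add: Fr_def o o' fXX fYY fEE fNN algebra_simps)
  have Fr3: "(Fr a1 a2 a3 a4) $ 3 = a1*hx + a2*hy + a3*u" for a1 a2 a3 a4
    by (simp add: Fr_def X3 Y3 E3 N3)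
  have Fr_eq: "Fr a1 a2 a3 a4 = Fr b1 b2 b3 b4" if "a1 = b1" "a2 = b2" "a3 = b3" "a4 = b4" for a1 a2 a3 a4 b1 b2 b3 b4
    using that by simp
  have XF: "X = Fr 1 0 0 0" and YF: "Y = Fr 0 1 0 0" and EF: "E = Fr 0 0 1 0" and NF: "Nv = Fr 0 0 0 1"
    by (simp_all add: Fr_def)
  have e3F: "e3 = Fr (hx/lam) (hy/lam) u 0"
    using dec[of e3] fXX fYY fEE fNN by (simp add: Fr_def X3 Y3 E3 N3 lor_comm)
  have "lor Ex Nv = u * hx" using xN fEX by (simp add: lor_vproj_right E3 X3)
  then have ExF: "Ex = Fr (a/lam) (b/lam) 0 (- u*hx)"
    using dec[of Ex] xX xY xE fXX fYY fEE fNN by (simp add: Fr_def)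
  have "lor Ey Nv = u * hy" using yN fEY by (simp add: lor_vproj_right E3 Y3)
  then have EyF: "Ey = Fr (b/lam) (c/lam) 0 (- u*hy)"
    using dec[of Ey] yX yY yE fXX fYY fEE fNN by (simp add: Fr_def)
  have vpF: "vproj (Fr a1 a2 a3 a4) = Fr a1 a2 a3 a4 - (a1*hx + a2*hy + a3*u) *\<^sub>R e3" for a1 a2 a3 a4
    by (simp add: vproj_alt Fr3)
  have "lor e3 e3 = 1" by simp
  then have "lam * lam = hx * (hx * lam) + (hy * (hy * lam) + lam * (lam * (u * u)))"
    unfolding e3F lor_Fr using lam by (simp add: field_simps power2_eq_square)
  then have "lam * (hx * hx + (hy * hy + lam * (u * u))) = lam * lam" by (simp add: algebra_simps)
  then have "hx * hx + (hy * hy + lam * (u * u)) = lam" using lam by simp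
  then have con: "hx^2 + hy^2 = lam * (1 - u^2)" by (simp add: power2_eq_square algebra_simps)
  have lnz: "lam \<noteq> 0" and unz: "u \<noteq> 0" using lam u by auto
  note rw = Fr_add Fr_diff Fr_scale Fr_minus vpF Fr3
  have PXF: "PX = Fr (-4*q1/(u^2*lam)) (4*q2/(u^2*lam)) (8*(q1*hx - q2*hy)/(u^3*lam)) (8*(q1*hx - q2*hy)/(u^3*lam))"
    unfolding PX_def
    apply (simp only: ExF)
    apply (simp only: XF EF NF)
    apply (simp only: rw e3F)
    apply (rule Fr_eq)
    apply (simp_all add: q1_def q2_def field_simps lnz unz)
    apply (algebra | (use con in algebra) | (use H in algebra) | (use con H in algebra))+
    done
  have PYF: "PY = Fr (4*q2/(u^2*lam)) (4*q1/(u^2*lam)) (-8*(q2*hx + q1*hy)/(u^3*lam)) (-8*(q2*hx + q1*hy)/(u^3*lam))"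
    unfolding PY_def
    apply (simp only: EyF)
    apply (simp only: YF EF NF)
    apply (simp only: rw e3F)
    apply (rule Fr_eq)
    apply (simp_all add: q1_def q2_def field_simps lnz unz)
    apply (algebra | (use con in algebra) | (use H in algebra) | (use con H in algebra))+
    done
  have ESF: "ES = Fr (2*hx/(u*lam)) (2*hy/(u*lam)) (1 - 2*(1-u^2)/u^2) (2 - 2/u^2)"
    unfolding ES_def
    apply (simp only: EF NF)
    apply (simp only: rw e3F)
    apply (rule Fr_eq)
    apply (simp_all add: q1_def q2_def field_simps lnz unz)
    apply (simp_all add: power2_eq_square)?
    apply ((algebra | (use con in algebra) | (use H in algebra) | (use con H in algebra))+)?
    done
  have NSF: "NS = Fr (-2*hx/(u*lam)) (-2*hy/(u*lam)) (2*(1-u^2)/u^2) (-1 + 2/u^2)"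
    unfolding NS_def
    apply (simp only: EF NF)
    apply (simp only: rw e3F)
    apply (rule Fr_eq)
    apply (simp_all add: q1_def q2_def field_simps lnz unz)
    apply (simp_all add: power2_eq_square)?
    apply ((algebra | (use con in algebra) | (use H in algebra) | (use con H in algebra))+)?
    done
  have u1: "u^2 \<le> 1"
  proof -
    have "0 \<le> lam * (1 - u^2)" using con by (metis add_nonneg_nonneg zero_le_power2)
    then show ?thesis using lam by (simp add: zero_le_mult_iff)
  qed
  show "lor PX PX = LS" unfolding PXF LS lor_Fr
    by (simp add: q1_def q2_def field_simps lnz unz; (algebra | (use con in algebra) | (use H in algebra) | (use con H in algebra)))
  show "lor PY PY = LS" unfolding PYF LS lor_Fr
    by (simp add: q1_def q2_def field_simps lnz unz; (algebra | (use con in algebra) | (use H in algebra) | (use con H in algebra)))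
  show "lor PX PY = 0" unfolding PXF PYF lor_Fr
    by (simp add: q1_def q2_def field_simps lnz unz; (algebra | (use con in algebra) | (use H in algebra) | (use con H in algebra)))
  show "lor ES ES = 1" unfolding ESF lor_Fr
    by (simp add: field_simps lnz unz; (algebra | (use con in algebra) | (use H in algebra) | (use con H in algebra)))
  show "lor ES PX = 0" unfolding ESF PXF lor_Fr
    by (simp add: q1_def q2_def field_simps lnz unz; (algebra | (use con in algebra) | (use H in algebra) | (use con H in algebra)))
  show "lor ES PY = 0" unfolding ESF PYF lor_Fr
    by (simp add: q1_def q2_def field_simps lnz unz; (algebra | (use con in algebra) | (use H in algebra) | (use con H in algebra)))
  show "lor ES NS = 0" unfolding ESF NSF lor_Fr
    by (simp add: field_simps lnz unz; (algebra | (use con in algebra) | (use H in algebra) | (use con H in algebra)))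
  show "lor NS NS = -1" unfolding NSF lor_Fr
    by (simp add: field_simps lnz unz; (algebra | (use con in algebra) | (use H in algebra) | (use con H in algebra)))
  have "lor NS Nv = 1 - 2 / u^2" unfolding NSF NF lor_Fr by simp
  also have "\<dots> < 0" using u1 u by (simp add: field_simps)
  finally show "lor NS Nv < 0" .
  have vN: "vproj Nv = Nv" using N3 by (simp add: vproj_alt)
  have EXe: "EXs = (Ex + vproj X) - vproj PX" unfolding EXs_def PX_def
    by (simp add: vN scaleR_2 algebra_simps)
  have EYe: "EYs = (Ey + vproj Y) - vproj PY" unfolding EYs_def PY_def
    by (simp add: vN scaleR_2 algebra_simps)
  have lX: "lor PX EXs = lor PX (Ex + vproj X) - lor PX PX + (PX $ 3)^2"
    unfolding EXe by (simp add: lor_vproj_right power2_eq_square)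
  have lY: "lor PY EYs = lor PY (Ey + vproj Y) - lor PY PY + (PY $ 3)^2"
    unfolding EYe by (simp add: lor_vproj_right power2_eq_square)
  have FXF: "Ex + vproj X = Fr ((a + lam - hx*hx)/lam) ((b - hx*hy)/lam) (- hx*u) (- u*hx)"
    apply (simp only: ExF)
    apply (simp only: XF EF NF)
    apply (simp only: rw e3F)
    apply (rule Fr_eq)
    apply (simp_all add: field_simps lnz unz)
    done
  have FYF: "Ey + vproj Y = Fr ((b - hx*hy)/lam) ((c + lam - hy*hy)/lam) (- hy*u) (- u*hy)"
    apply (simp only: EyF)
    apply (simp only: YF EF NF)
    apply (simp only: rw e3F)
    apply (rule Fr_eq)
    apply (simp_all add: field_simps lnz unz)
    done
  have S1: "lor PX (Ex + vproj X) + lor PY (Ey + vproj Y) = u^2 * LS"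
    unfolding PXF PYF FXF FYF LS lor_Fr
    by (simp add: q1_def q2_def field_simps lnz unz; (algebra | (use con in algebra) | (use H in algebra) | (use con H in algebra)))
  have S2: "(PX $ 3)^2 + (PY $ 3)^2 = (1 - u^2) * LS"
    unfolding PXF PYF Fr3 LS
    by (simp add: q1_def q2_def field_simps lnz unz; (algebra | (use con in algebra) | (use H in algebra) | (use con H in algebra)))
  show "- (lor PX EXs + lor PY EYs) = LS"
    unfolding lX lY using S1 S2 \<open>lor PX PX = LS\<close> \<open>lor PY PY = LS\<close> by (simp add: algebra_simps)
qed

lemma deriv_2sq:
  fixes x :: real assumes "x \<noteq> 0"
  shows "((\<lambda>x. 2 / x^2) has_real_derivative (-4 / x^3)) (at x)"
  using assms by (auto intro!: derivative_eq_intros simp: field_simps power2_eq_square power3_eq_cube)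

lemma hd_g:
  fixes u :: "complex \<Rightarrow> real"
  assumes "(u has_derivative u') (at w)" "u w \<noteq> 0"
  shows "((\<lambda>w. 2 / (u w)^2) has_derivative (\<lambda>h. (-4 / (u w)^3) * u' h)) (at w)"
  using has_derivative_compose[OF assms(1) deriv_2sq[OF assms(2), unfolded has_field_derivative_def]] .

lemma hd_nth3:
  assumes "(f has_derivative f') (at w)"
  shows "((\<lambda>w. f w $ 3) has_derivative (\<lambda>h. f' h $ 3)) (at w)"
  using bounded_linear.has_derivative[OF bounded_linear_vec_nth assms] .

lemma hd_vproj:
  assumes "(f has_derivative f') (at w)"
  shows "((\<lambda>w. vproj (f w)) has_derivative (\<lambda>h. vproj (f' h))) (at w)"
  using bounded_linear.has_derivative[OF bounded_linear_vproj assms] .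

definition psh :: "(complex \<Rightarrow> L4) \<Rightarrow> (complex \<Rightarrow> L4) \<Rightarrow> complex \<Rightarrow> L4" where
  "psh \<psi> \<eta> w = - \<psi> w + (2 / (\<eta> w $ 3)^2) *\<^sub>R (\<eta> w + vproj (\<psi> w))"

definition esh :: "(complex \<Rightarrow> L4) \<Rightarrow> (complex \<Rightarrow> L4) \<Rightarrow> complex \<Rightarrow> L4" where
  "esh \<psi> \<eta> w = \<eta> w + 2 *\<^sub>R vproj (\<psi> w) - (2 / (\<eta> w $ 3)^2) *\<^sub>R (vproj (\<eta> w) + vproj (\<psi> w))"

lemma psharp_eq: "psharp \<psi> \<eta> = psh \<psi> \<eta>"
  by (auto simp: fun_eq_iff psharp_def psh_def hgauss1_def angle_def power2_eq_square)

lemma deriv_psh: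
  assumes "\<psi> differentiable (at w)" "\<eta> differentiable (at w)" "\<eta> w $ 3 \<noteq> 0"
  shows "psh \<psi> \<eta> differentiable (at w)"
    "px (psh \<psi> \<eta>) w = - px \<psi> w + (2 / (\<eta> w $ 3)^2) *\<^sub>R (px \<eta> w + vproj (px \<psi> w))
        + (- 4 * px \<eta> w $ 3 / (\<eta> w $ 3)^3) *\<^sub>R (\<eta> w + vproj (\<psi> w))"
    "py (psh \<psi> \<eta>) w = - py \<psi> w + (2 / (\<eta> w $ 3)^2) *\<^sub>R (py \<eta> w + vproj (py \<psi> w))
        + (- 4 * py \<eta> w $ 3 / (\<eta> w $ 3)^3) *\<^sub>R (\<eta> w + vproj (\<psi> w))"
proof -
  let ?P = "frechet_derivative \<psi> (at w)" and ?E = "frechet_derivative \<eta> (at w)"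
  have hp: "(\<psi> has_derivative ?P) (at w)" using assms(1) frechet_derivative_works by blast
  have he: "(\<eta> has_derivative ?E) (at w)" using assms(2) frechet_derivative_works by blast
  have hg: "((\<lambda>w. 2 / (\<eta> w $ 3)^2) has_derivative (\<lambda>h. (-4 / (\<eta> w $ 3)^3) * (?E h $ 3))) (at w)"
    using hd_g[OF hd_nth3[OF he]] assms(3) by simp
  have hv: "((\<lambda>w. \<eta> w + vproj (\<psi> w)) has_derivative (\<lambda>h. ?E h + vproj (?P h))) (at w)"
    using has_derivative_add[OF he hd_vproj[OF hp]] .
  have h: "(psh \<psi> \<eta> has_derivative (\<lambda>h. - ?P h + ((2 / (\<eta> w $ 3)^2) *\<^sub>R (?E h + vproj (?P h))
       + ((-4 / (\<eta> w $ 3)^3) * (?E h $ 3)) *\<^sub>R (\<eta> w + vproj (\<psi> w))))) (at w)"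
    unfolding psh_def[abs_def]
    by (rule has_derivative_add[OF has_derivative_minus[OF hp] has_derivative_scaleR[OF hg hv]])
  show "psh \<psi> \<eta> differentiable (at w)" using h differentiable_def by blast
  show "px (psh \<psi> \<eta>) w = - px \<psi> w + (2 / (\<eta> w $ 3)^2) *\<^sub>R (px \<eta> w + vproj (px \<psi> w))
        + (- 4 * px \<eta> w $ 3 / (\<eta> w $ 3)^3) *\<^sub>R (\<eta> w + vproj (\<psi> w))"
    using px_hasderiv[OF h] px_diff[OF assms(1)] px_diff[OF assms(2)] by simp
  show "py (psh \<psi> \<eta>) w = - py \<psi> w + (2 / (\<eta> w $ 3)^2) *\<^sub>R (py \<eta> w + vproj (py \<psi> w))
        + (- 4 * py \<eta> w $ 3 / (\<eta> w $ 3)^3) *\<^sub>R (\<eta> w + vproj (\<psi> w))"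
    using py_hasderiv[OF h] py_diff[OF assms(1)] py_diff[OF assms(2)] by simp
qed

lemma deriv_esh:
  assumes "\<psi> differentiable (at w)" "\<eta> differentiable (at w)" "\<eta> w $ 3 \<noteq> 0"
  shows "esh \<psi> \<eta> differentiable (at w)"
    "px (esh \<psi> \<eta>) w = px \<eta> w + 2 *\<^sub>R vproj (px \<psi> w) - (2 / (\<eta> w $ 3)^2) *\<^sub>R (vproj (px \<eta> w) + vproj (px \<psi> w))
        + (4 * px \<eta> w $ 3 / (\<eta> w $ 3)^3) *\<^sub>R (vproj (\<eta> w) + vproj (\<psi> w))"
    "py (esh \<psi> \<eta>) w = py \<eta> w + 2 *\<^sub>R vproj (py \<psi> w) - (2 / (\<eta> w $ 3)^2) *\<^sub>R (vproj (py \<eta> w) + vproj (py \<psi> w))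
        + (4 * py \<eta> w $ 3 / (\<eta> w $ 3)^3) *\<^sub>R (vproj (\<eta> w) + vproj (\<psi> w))"
proof -
  let ?P = "frechet_derivative \<psi> (at w)" and ?E = "frechet_derivative \<eta> (at w)"
  have hp: "(\<psi> has_derivative ?P) (at w)" using assms(1) frechet_derivative_works by blast
  have he: "(\<eta> has_derivative ?E) (at w)" using assms(2) frechet_derivative_works by blast
  have hg: "((\<lambda>w. 2 / (\<eta> w $ 3)^2) has_derivative (\<lambda>h. (-4 / (\<eta> w $ 3)^3) * (?E h $ 3))) (at w)"
    using hd_g[OF hd_nth3[OF he]] assms(3) by simp
  have hv: "((\<lambda>w. vproj (\<eta> w) + vproj (\<psi> w)) has_derivative (\<lambda>h. vproj (?E h) + vproj (?P h))) (at w)"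
    using has_derivative_add[OF hd_vproj[OF he] hd_vproj[OF hp]] .
  have h2: "((\<lambda>w. 2 *\<^sub>R vproj (\<psi> w)) has_derivative (\<lambda>h. 2 *\<^sub>R vproj (?P h))) (at w)"
    using has_derivative_scaleR_right[OF hd_vproj[OF hp]] .
  have h: "(esh \<psi> \<eta> has_derivative (\<lambda>h. ?E h + 2 *\<^sub>R vproj (?P h) - ((2 / (\<eta> w $ 3)^2) *\<^sub>R (vproj (?E h) + vproj (?P h))
       + ((-4 / (\<eta> w $ 3)^3) * (?E h $ 3)) *\<^sub>R (vproj (\<eta> w) + vproj (\<psi> w))))) (at w)"
    unfolding esh_def[abs_def]
    by (rule has_derivative_diff[OF has_derivative_add[OF he h2] has_derivative_scaleR[OF hg hv]])
  show "esh \<psi> \<eta> differentiable (at w)" using h differentiable_def by blast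
  show "px (esh \<psi> \<eta>) w = px \<eta> w + 2 *\<^sub>R vproj (px \<psi> w) - (2 / (\<eta> w $ 3)^2) *\<^sub>R (vproj (px \<eta> w) + vproj (px \<psi> w))
        + (4 * px \<eta> w $ 3 / (\<eta> w $ 3)^3) *\<^sub>R (vproj (\<eta> w) + vproj (\<psi> w))"
    using px_hasderiv[OF h] px_diff[OF assms(1)] px_diff[OF assms(2)] by (simp add: algebra_simps)
  show "py (esh \<psi> \<eta>) w = py \<eta> w + 2 *\<^sub>R vproj (py \<psi> w) - (2 / (\<eta> w $ 3)^2) *\<^sub>R (vproj (py \<eta> w) + vproj (py \<psi> w))
        + (4 * py \<eta> w $ 3 / (\<eta> w $ 3)^3) *\<^sub>R (vproj (\<eta> w) + vproj (\<psi> w))"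
    using py_hasderiv[OF h] py_diff[OF assms(1)] py_diff[OF assms(2)] by (simp add: algebra_simps)
qed

lemma sm_psh_esh:
  assumes S: "open S" and u: "\<forall>w\<in>S. \<eta> w $ 3 \<noteq> 0" and p: "sm S n \<psi>" and e: "sm S n \<eta>"
  shows "sm S n (psh \<psi> \<eta>)" "sm S n (esh \<psi> \<eta>)"
proof -
  have m: "bounded_linear (\<lambda>x::L4. - x)" by (simp add: bounded_linear_minus bounded_linear_ident)
  have su: "sm S n (\<lambda>w. \<eta> w $ 3)" using sm_lin[OF S bounded_linear_vec_nth e] .
  have si: "sm S n (\<lambda>w. inverse (\<eta> w $ 3))" using sm_inv[OF S u su] .
  have sg: "sm S n (\<lambda>w. 2 * (inverse (\<eta> w $ 3) * inverse (\<eta> w $ 3)))"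
    using sm_bil[OF S bounded_bilinear_mult sm_const sm_bil[OF S bounded_bilinear_mult si si]] .
  have svp: "sm S n (\<lambda>w. vproj (\<psi> w))" using sm_lin[OF S bounded_linear_vproj p] .
  have sve: "sm S n (\<lambda>w. vproj (\<eta> w))" using sm_lin[OF S bounded_linear_vproj e] .
  have sV: "sm S n (\<lambda>w. \<eta> w + vproj (\<psi> w))" using sm_add[OF S e svp] .
  have sV2: "sm S n (\<lambda>w. vproj (\<eta> w) + vproj (\<psi> w))" using sm_add[OF S sve svp] .
  have sg2: "sm S n (\<lambda>w. 2 / (\<eta> w $ 3)^2)"
    by (rule sm_cong[OF S _ sg]) (simp add: power2_eq_square divide_inverse inverse_mult_distrib)
  have "psh \<psi> \<eta> = (\<lambda>w. - \<psi> w + (2 / (\<eta> w $ 3)^2) *\<^sub>R (\<eta> w + vproj (\<psi> w)))"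
    by (simp add: fun_eq_iff psh_def)
  moreover have "sm S n (\<lambda>w. - \<psi> w + (2 / (\<eta> w $ 3)^2) *\<^sub>R (\<eta> w + vproj (\<psi> w)))"
    using sm_add[OF S sm_lin[OF S m p] sm_bil[OF S bounded_bilinear_scaleR sg2 sV]] .
  ultimately show "sm S n (psh \<psi> \<eta>)" by simp
  have "esh \<psi> \<eta> = (\<lambda>w. (\<eta> w + (2::real) *\<^sub>R vproj (\<psi> w)) + - ((2 / (\<eta> w $ 3)^2) *\<^sub>R (vproj (\<eta> w) + vproj (\<psi> w))))"
    by (simp add: fun_eq_iff esh_def)
  moreover have "sm S n (\<lambda>w. (\<eta> w + (2::real) *\<^sub>R vproj (\<psi> w)) + - ((2 / (\<eta> w $ 3)^2) *\<^sub>R (vproj (\<eta> w) + vproj (\<psi> w))))"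
    using sm_add[OF S sm_add[OF S e sm_bil[OF S bounded_bilinear_scaleR sm_const svp]]
        sm_lin[OF S m sm_bil[OF S bounded_bilinear_scaleR sg2 sV2]]] .
  ultimately show "sm S n (esh \<psi> \<eta>)" by simp
qed

lemma hyp_pos:
  fixes a0 a1 a2 b0 b1 b2 :: real
  assumes a: "- a0*a0 + a1*a1 + a2*a2 = -1" and b: "- b0*b0 + b1*b1 + b2*b2 = -1"
    and a0: "a0 > 0" and ab: "- a0*b0 + a1*b1 + a2*b2 < 0"
  shows "b0 > 0"
proof (rule ccontr)
  assume "\<not> b0 > 0"
  then have b0: "b0 \<le> 0" by simp
  let ?x = "a1*b1 + a2*b2"
  have x: "?x < a0 * b0" using ab by simp
  have ab0: "a0 * b0 \<le> 0" using a0 b0 by (simp add: mult_nonneg_nonpos)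
  have "(a0*b0)^2 < ?x^2"
  proof -
    have "0 \<le> - (a0*b0)" using ab0 by simp
    moreover have "- (a0*b0) < - ?x" using x by simp
    ultimately have "(- (a0*b0))^2 < (- ?x)^2" by (intro power_strict_mono) auto
    then show ?thesis by (simp only: power2_minus)
  qed
  moreover have "?x^2 \<le> (a1*a1 + a2*a2) * (b1*b1 + b2*b2)"
  proof -
    have "(a1*a1 + a2*a2) * (b1*b1 + b2*b2) - ?x^2 = (a1*b2 - a2*b1)^2" by (simp add: power2_eq_square algebra_simps)
    then show ?thesis by (metis diff_ge_0_iff_ge zero_le_power2)
  qed
  moreover have "(a1*a1 + a2*a2) * (b1*b1 + b2*b2) = (a0*a0 - 1) * (b0*b0 - 1)"
  proof -
    have A: "a1*a1 + a2*a2 = a0*a0 - 1" using a by linarith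
    have B: "b1*b1 + b2*b2 = b0*b0 - 1" using b by linarith
    show ?thesis by (simp only: A B)
  qed
  moreover have "a0*a0 \<ge> 1" using a zero_le_square[of a1] zero_le_square[of a2] by linarith
  moreover have "b0*b0 \<ge> 1" using b zero_le_square[of b1] zero_le_square[of b2] by linarith
  moreover have "(a0*b0)^2 = (a0*a0)*(b0*b0)" by (simp add: power2_eq_square algebra_simps)
  moreover have "(a0*a0 - 1) * (b0*b0 - 1) = (a0*a0)*(b0*b0) - a0*a0 - b0*b0 + 1" by (simp add: algebra_simps)
  ultimately show False by linarith
qed

lemma lor_const_deriv:
  assumes S: "open S" "w \<in> S" and k: "\<forall>v\<in>S. lor (f v) (g v) = k"
    and df: "f differentiable (at w)" and dg: "g differentiable (at w)"
  shows "lor (px f w) (g w) + lor (f w) (px g w) = 0" "lor (py f w) (g w) + lor (f w) (py g w) = 0"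
proof -
  have d: "(\<lambda>v. lor (f v) (g v)) differentiable (at w)" using px_bil(1)[OF bounded_bilinear_lor df dg] .
  have "px (\<lambda>v. lor (f v) (g v)) w = px (\<lambda>v. k) w" "py (\<lambda>v. lor (f v) (g v)) w = py (\<lambda>v. k) w"
    using deriv_local(2,3)[OF S k differentiable_const] by auto
  then show "lor (px f w) (g w) + lor (f w) (px g w) = 0" "lor (py f w) (g w) + lor (f w) (py g w) = 0"
    using px_bil(2,3)[OF bounded_bilinear_lor df dg] px_const by auto
qed

theorem mainTheorem11:
  fixes S :: "complex set" and \<psi> \<eta> :: "complex \<Rightarrow> real ^ 4"
  assumes "open S"
    and "conformal_immersion S \<psi>"
    and "smooth_on S \<eta>"
    and "unit_normal S \<psi> \<eta>"
    and "\<forall>z\<in>S. angle \<eta> z > 0"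
    and "\<forall>z\<in>S. meancurv \<psi> \<eta> z = 1/2"
    and "\<forall>z\<in>S. ARQ \<psi> \<eta> z \<noteq> 0"
  shows "(\<forall>z\<in>S. psharp \<psi> \<eta> z = - \<psi> z + (2 / (angle \<eta> z)^2) *\<^sub>R (\<eta> z + vproj (\<psi> z)))
    \<and> conformal_immersion S (psharp \<psi> \<eta>)
    \<and> (\<exists>\<eta>s. smooth_on S \<eta>s \<and> unit_normal S (psharp \<psi> \<eta>) \<eta>s
         \<and> (\<forall>z\<in>S. angle \<eta>s z = angle \<eta> z
                 \<and> meancurv (psharp \<psi> \<eta>) \<eta>s z = 1/2
                 \<and> hgauss1 (psharp \<psi> \<eta>) \<eta>s z = hgauss1 \<psi> \<eta> z))
    \<and> (\<forall>z\<in>S. lam (psharp \<psi> \<eta>) z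
               = 16 * (cmod (ARQ \<psi> \<eta> z))^2 / (lam \<psi> z * (angle \<eta> z)^4))"
proof -
  have S: "open S" using assms(1) .
  have smoothp: "smooth_on S \<psi>"
    and ci: "\<forall>z\<in>S. \<psi> z \<in> H2R \<and> lam \<psi> z > 0 \<and> lor (py \<psi> z) (py \<psi> z) = lam \<psi> z \<and> lor (px \<psi> z) (py \<psi> z) = 0"
    using assms(2) unfolding conformal_immersion_def by auto
  have smp: "sm S n \<psi>" for n using smoothp smooth_sm by blast
  have sme: "sm S n \<eta>" for n using assms(3) smooth_sm by blast
  have un: "\<forall>z\<in>S. lor (\<eta> z) (\<eta> z) = 1 \<and> lor (\<eta> z) (px \<psi> z) = 0 \<and> lor (\<eta> z) (py \<psi> z) = 0 \<and> lor (\<eta> z) (vproj (\<psi> z)) = 0"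
    using assms(4) unfolding unit_normal_def .
  have upos: "\<forall>z\<in>S. \<eta> z $ 3 > 0" using assms(5) by (simp add: angle_def)
  have unz: "\<forall>z\<in>S. \<eta> z $ 3 \<noteq> 0" using upos by force
  have smps: "sm S n (psh \<psi> \<eta>)" "sm S n (esh \<psi> \<eta>)" for n using sm_psh_esh[OF S unz smp sme] by auto
  have dp: "\<forall>w\<in>S. \<psi> differentiable (at w)" using sm_diff[OF smp] by blast
  have de: "\<forall>w\<in>S. \<eta> differentiable (at w)" using sm_diff[OF sme] by blast
  have dpx: "\<forall>w\<in>S. px \<psi> differentiable (at w)" using sm_diff[OF sm_SucD(1)[OF smp]] by blast
  have dpy: "\<forall>w\<in>S. py \<psi> differentiable (at w)" using sm_diff[OF sm_SucD(2)[OF smp]] by blast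
  have dvp: "\<forall>w\<in>S. (\<lambda>v. vproj (\<psi> v)) differentiable (at w)" using px_lin(1)[OF bounded_linear_vproj] dp by blast
  have pvp: "\<forall>w\<in>S. px (\<lambda>v. vproj (\<psi> v)) w = vproj (px \<psi> w) \<and> py (\<lambda>v. vproj (\<psi> v)) w = vproj (py \<psi> w)"
    using px_lin(2,3)[OF bounded_linear_vproj] dp by blast
  define L where "L w = 16 * (cmod (ARQ \<psi> \<eta> w))^2 / (lam \<psi> w * (angle \<eta> w)^4)" for w
  have key: "lor (px (psh \<psi> \<eta>) w) (px (psh \<psi> \<eta>) w) = L w \<and> lor (py (psh \<psi> \<eta>) w) (py (psh \<psi> \<eta>) w) = L w
     \<and> lor (px (psh \<psi> \<eta>) w) (py (psh \<psi> \<eta>) w) = 0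
     \<and> lor (esh \<psi> \<eta> w) (esh \<psi> \<eta> w) = 1 \<and> lor (esh \<psi> \<eta> w) (px (psh \<psi> \<eta>) w) = 0
     \<and> lor (esh \<psi> \<eta> w) (py (psh \<psi> \<eta>) w) = 0 \<and> lor (esh \<psi> \<eta> w) (vproj (psh \<psi> \<eta> w)) = 0
     \<and> psh \<psi> \<eta> w \<in> H2R \<and> L w > 0
     \<and> - (lor (px (psh \<psi> \<eta>) w) (px (esh \<psi> \<eta>) w) + lor (py (psh \<psi> \<eta>) w) (py (esh \<psi> \<eta>) w)) = L w"
    if w: "w \<in> S" for w
  proof -
    let ?X = "px \<psi> w" and ?Y = "py \<psi> w" and ?E = "\<eta> w" and ?N = "vproj (\<psi> w)"
    let ?Ex = "px \<eta> w" and ?Ey = "py \<eta> w" and ?l = "lam \<psi> w" and ?u = "\<eta> w $ 3"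
    have lpos: "?l > 0" and fYY: "lor ?Y ?Y = ?l" and fXY: "lor ?X ?Y = 0" and H2: "\<psi> w \<in> H2R"
      using ci w by auto
    have fXX: "lor ?X ?X = ?l" by (simp add: lam_def)
    have fEE: "lor ?E ?E = 1" and fEX: "lor ?E ?X = 0" and fEY: "lor ?E ?Y = 0" and fEN: "lor ?E ?N = 0"
      using un w by auto
    have fNN: "lor ?N ?N = -1" using H2 by (simp add: H2R_iff)
    have N3: "?N $ 3 = 0" by simp
    have upw: "?u > 0" using upos w by auto
    have hconst: "\<forall>v\<in>S. lor (vproj (\<psi> v)) (vproj (\<psi> v)) = -1" using ci by (simp add: H2R_iff)
    note c1 = lor_const_deriv[OF S w hconst] 
    have "lor (vproj ?X) ?N + lor ?N (vproj ?X) = 0" "lor (vproj ?Y) ?N + lor ?N (vproj ?Y) = 0"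
      using c1 dvp pvp w by auto
    then have "lor (vproj ?X) ?N = 0" "lor (vproj ?Y) ?N = 0"
      by (simp_all add: lor_comm[of ?N])
    then have fXN: "lor ?X ?N = 0" and fYN: "lor ?Y ?N = 0"
      by (simp_all add: lor_vproj_left)
    have k2: "\<forall>v\<in>S. lor (\<eta> v) (\<eta> v) = 1" using un by auto
    note c2 = lor_const_deriv[OF S w k2]
    have xE: "lor ?Ex ?E = 0" and yE: "lor ?Ey ?E = 0"
      using c2 de w by (auto simp: lor_comm[of ?E])
    have k3: "\<forall>v\<in>S. lor (\<eta> v) (vproj (\<psi> v)) = 0" using un by auto
    note c3 = lor_const_deriv[OF S w k3]
    have xN: "lor ?Ex ?N = - lor ?E (vproj ?X)" and yN: "lor ?Ey ?N = - lor ?E (vproj ?Y)"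
      using c3 de dvp pvp w by (auto simp: algebra_simps eq_neg_iff_add_eq_0)
    have k4: "\<forall>v\<in>S. lor (\<eta> v) (px \<psi> v) = 0" using un by auto
    note c4 = lor_const_deriv[OF S w k4]
    have k5: "\<forall>v\<in>S. lor (\<eta> v) (py \<psi> v) = 0" using un by auto
    note c5 = lor_const_deriv[OF S w k5]
    have e4x: "lor ?Ex ?X + lor ?E (px (px \<psi>) w) = 0" and e4y: "lor ?Ey ?X + lor ?E (py (px \<psi>) w) = 0"
      using c4 de dpx w by auto
    have e5x: "lor ?Ex ?Y + lor ?E (px (py \<psi>) w) = 0" and e5y: "lor ?Ey ?Y + lor ?E (py (py \<psi>) w) = 0"
      using c5 de dpy w by auto
    have sch: "py (px \<psi>) w = px (py \<psi>) w" using schwarz[OF S w smp] .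
    have yX: "lor ?Ey ?X = lor ?Ex ?Y" using e4y e5x sch by simp
    have "(lor (px (px \<psi>) w) ?E + lor (py (py \<psi>) w) ?E) / (2 * ?l) = 1/2"
      using assms(6) w unfolding meancurv_def by auto
    then have mc: "lor (px (px \<psi>) w) ?E + lor (py (py \<psi>) w) ?E = ?l"
      using lpos by (simp add: field_simps)
    have H: "lor ?Ex ?X + lor ?Ey ?Y = - ?l" using mc e4x e5y by (simp add: lor_comm)
    note C = core[OF lpos upw fXX fYY fXY fEE fEX fEY fEN fNN fXN fYN N3 refl refl refl xE yE xN yN
        refl refl yX refl H]
    have hx: "px (\<lambda>v. height (\<psi> v)) w = ?X $ 3" and hy: "py (\<lambda>v. height (\<psi> v)) w = ?Y $ 3"
      unfolding height_def using px_lin(2,3)[OF bounded_linear_vec_nth, of \<psi> w 3] dp w by auto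
    have m12: "meancurv \<psi> \<eta> w = 1/2" using assms(6) w by auto
    have ARQe: "ARQ \<psi> \<eta> w = Complex ((lor ?Ey ?Y - lor ?Ex ?X + (?X$3)^2 - (?Y$3)^2) / 4) ((lor ?Ex ?Y - ?X$3 * ?Y$3) / 2)"
      unfolding ARQ_def pfun_def lorC_def dz_def dzr_def m12 hx hy
      using yX by (simp add: complex_eq_iff lor_comm[of ?X] lor_comm[of ?Y] power2_eq_square field_simps)
    have Lw: "L w = 16 * (((lor ?Ey ?Y - lor ?Ex ?X + (?X$3)^2 - (?Y$3)^2) / 4)^2 + ((lor ?Ex ?Y - ?X$3 * ?Y$3) / 2)^2) / (?l * ?u^4)"
      unfolding L_def ARQe by (simp add: complex_norm angle_def)
    have Lpos: "L w > 0"
    proof -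
      have "ARQ \<psi> \<eta> w \<noteq> 0" using assms(7) w by auto
      then have "cmod (ARQ \<psi> \<eta> w) > 0" by simp
      then show ?thesis unfolding L_def angle_def using lpos upw
        by (intro divide_pos_pos mult_pos_pos zero_less_power) auto
    qed
    have dpw: "\<psi> differentiable (at w)" "\<eta> differentiable (at w)" "\<eta> w $ 3 \<noteq> 0" using dp de unz w by auto
    note dps = deriv_psh[OF dpw] and des = deriv_esh[OF dpw]
    have vps: "vproj (psh \<psi> \<eta> w) = - ?N + (2 / ?u^2) *\<^sub>R (vproj ?E + ?N)"
      by (simp add: psh_def)
    have esw: "esh \<psi> \<eta> w = ?E + 2 *\<^sub>R ?N - (2 / ?u^2) *\<^sub>R (vproj ?E + ?N)" by (simp add: esh_def)
    have H2s: "psh \<psi> \<eta> w \<in> H2R"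
    proof -
      have n1: "lor (vproj (psh \<psi> \<eta> w)) (vproj (psh \<psi> \<eta> w)) = -1" unfolding vps using C(8) .
      have n2: "lor (vproj (psh \<psi> \<eta> w)) ?N < 0" unfolding vps using C(9) by (simp add: lor_comm)
      have p0: "?N $ 0 > 0" using H2 by (simp add: H2R_iff)
      let ?b = "vproj (psh \<psi> \<eta> w)"
      have "?b $ 0 > 0"
        by (rule hyp_pos[of "?N $ 0" "?N $ 1" "?N $ 2" "?b $ 0" "?b $ 1" "?b $ 2"])
          (use fNN n1 n2 p0 in \<open>simp_all add: lor_def algebra_simps\<close>)
      then show ?thesis using n1 by (simp add: H2R_iff)
    qed
    have A1: "lor (px (psh \<psi> \<eta>) w) (px (psh \<psi> \<eta>) w) = L w" unfolding dps(2) Lw by (rule C(1))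
    have A2: "lor (py (psh \<psi> \<eta>) w) (py (psh \<psi> \<eta>) w) = L w" unfolding dps(3) Lw by (rule C(2))
    have A3: "lor (px (psh \<psi> \<eta>) w) (py (psh \<psi> \<eta>) w) = 0" unfolding dps(2,3) by (rule C(3))
    have A4: "lor (esh \<psi> \<eta> w) (esh \<psi> \<eta> w) = 1" unfolding esw by (rule C(4))
    have A5: "lor (esh \<psi> \<eta> w) (px (psh \<psi> \<eta>) w) = 0" unfolding esw dps(2) by (rule C(5))
    have A6: "lor (esh \<psi> \<eta> w) (py (psh \<psi> \<eta>) w) = 0" unfolding esw dps(3) by (rule C(6))
    have A7: "lor (esh \<psi> \<eta> w) (vproj (psh \<psi> \<eta> w)) = 0" unfolding esw vps by (rule C(7))
    have A10: "- (lor (px (psh \<psi> \<eta>) w) (px (esh \<psi> \<eta>) w) + lor (py (psh \<psi> \<eta>) w) (py (esh \<psi> \<eta>) w)) = L w"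
      unfolding dps(2,3) des(2,3) Lw by (rule C(10))
    show ?thesis using A1 A2 A3 A4 A5 A6 A7 A10 Lpos H2s by blast
  qed
  have P1: "\<forall>z\<in>S. psharp \<psi> \<eta> z = - \<psi> z + (2 / (angle \<eta> z)^2) *\<^sub>R (\<eta> z + vproj (\<psi> z))"
    by (simp add: psharp_eq psh_def angle_def)
  have lamps: "lam (psh \<psi> \<eta>) z = L z" if "z \<in> S" for z
    using key[OF that] by (simp add: lam_def)
  have P2: "conformal_immersion S (psh \<psi> \<eta>)"
    unfolding conformal_immersion_def
  proof (intro conjI ballI)
    show "smooth_on S (psh \<psi> \<eta>)" using smps(1) smooth_sm by blast
  next
    fix z assume z: "z \<in> S"
    show "psh \<psi> \<eta> z \<in> H2R" "0 < lam (psh \<psi> \<eta>) z" "lor (py (psh \<psi> \<eta>) z) (py (psh \<psi> \<eta>) z) = lam (psh \<psi> \<eta>) z"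
      "lor (px (psh \<psi> \<eta>) z) (py (psh \<psi> \<eta>) z) = 0"
      using key[OF z] lamps[OF z] by auto
  qed
  have un2: "unit_normal S (psh \<psi> \<eta>) (esh \<psi> \<eta>)"
    unfolding unit_normal_def using key by blast
  have ang: "angle (esh \<psi> \<eta>) z = angle \<eta> z" for z by (simp add: angle_def esh_def)
  have hg: "hgauss1 (psh \<psi> \<eta>) (esh \<psi> \<eta>) z = hgauss1 \<psi> \<eta> z" for z
  proof -
    have gen: "(a + 2 *\<^sub>R p - q) + (- p + q) = a + p" for a p q :: L4
      by (simp add: scaleR_2 algebra_simps)
    have "vproj (psh \<psi> \<eta> z) = - vproj (\<psi> z) + (2/(\<eta> z $ 3)^2) *\<^sub>R (vproj (\<eta> z) + vproj (\<psi> z))"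
      by (simp add: psh_def)
    then have "esh \<psi> \<eta> z + vproj (psh \<psi> \<eta> z) = \<eta> z + vproj (\<psi> z)"
      unfolding esh_def using gen by presburger
    then show ?thesis unfolding hgauss1_def ang by simp
  qed
  have mc2: "meancurv (psh \<psi> \<eta>) (esh \<psi> \<eta>) z = 1/2" if z: "z \<in> S" for z
  proof -
    have kx: "\<forall>v\<in>S. lor (px (psh \<psi> \<eta>) v) (esh \<psi> \<eta> v) = 0" using key by (auto simp: lor_comm)
    have ky: "\<forall>v\<in>S. lor (py (psh \<psi> \<eta>) v) (esh \<psi> \<eta> v) = 0" using key by (auto simp: lor_comm)
    have d1: "px (psh \<psi> \<eta>) differentiable (at z)" using sm_diff[OF sm_SucD(1)[OF smps(1)]] z by blast
    have d2: "py (psh \<psi> \<eta>) differentiable (at z)" using sm_diff[OF sm_SucD(2)[OF smps(1)]] z by blast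
    have d3: "esh \<psi> \<eta> differentiable (at z)" using sm_diff[OF smps(2)] z by blast
    have ex: "lor (px (px (psh \<psi> \<eta>)) z) (esh \<psi> \<eta> z) + lor (px (psh \<psi> \<eta>) z) (px (esh \<psi> \<eta>) z) = 0"
      using lor_const_deriv(1)[OF S z kx d1 d3] .
    have ey: "lor (py (py (psh \<psi> \<eta>)) z) (esh \<psi> \<eta> z) + lor (py (psh \<psi> \<eta>) z) (py (esh \<psi> \<eta>) z) = 0"
      using lor_const_deriv(2)[OF S z ky d2 d3] .
    have "lor (px (px (psh \<psi> \<eta>)) z) (esh \<psi> \<eta> z) + lor (py (py (psh \<psi> \<eta>)) z) (esh \<psi> \<eta> z) = L z"
      using ex ey key[OF z] by linarith
    moreover have "L z > 0" using key[OF z] by blast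
    ultimately show ?thesis unfolding meancurv_def lamps[OF z] by simp
  qed
  show ?thesis
  proof (intro conjI)
    show "\<forall>z\<in>S. psharp \<psi> \<eta> z = - \<psi> z + (2 / (angle \<eta> z)^2) *\<^sub>R (\<eta> z + vproj (\<psi> z))" using P1 .
    show "conformal_immersion S (psharp \<psi> \<eta>)" using P2 by (simp add: psharp_eq)
    show "\<exists>\<eta>s. smooth_on S \<eta>s \<and> unit_normal S (psharp \<psi> \<eta>) \<eta>s
         \<and> (\<forall>z\<in>S. angle \<eta>s z = angle \<eta> z
                 \<and> meancurv (psharp \<psi> \<eta>) \<eta>s z = 1/2
                 \<and> hgauss1 (psharp \<psi> \<eta>) \<eta>s z = hgauss1 \<psi> \<eta> z)"
    proof (intro exI conjI ballI)
      show "smooth_on S (esh \<psi> \<eta>)" using smps(2) smooth_sm by blast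
      show "unit_normal S (psharp \<psi> \<eta>) (esh \<psi> \<eta>)" using un2 by (simp add: psharp_eq)
      fix z assume z: "z \<in> S"
      show "angle (esh \<psi> \<eta>) z = angle \<eta> z" by (rule ang)
      show "meancurv (psharp \<psi> \<eta>) (esh \<psi> \<eta>) z = 1/2" using mc2[OF z] by (simp add: psharp_eq)
      show "hgauss1 (psharp \<psi> \<eta>) (esh \<psi> \<eta>) z = hgauss1 \<psi> \<eta> z" using hg by (simp add: psharp_eq)
    qed
    show "\<forall>z\<in>S. lam (psharp \<psi> \<eta>) z = 16 * (cmod (ARQ \<psi> \<eta> z))^2 / (lam \<psi> z * (angle \<eta> z)^4)"
      using lamps by (simp add: psharp_eq L_def)
  qed
qed

end
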